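(* For every positive integer $n$, every proper arc-colouring of type I of the complete symmetric digraph $\overleftrightarrow{K_n}$ is distinguishing. Consequently, $$\chi'_{D_{1,2}}(\overleftrightarrow{K_n}) = \chi'_{1,2}(\overleftrightarrow{K_n}) = \min\left\{k : n \leq \binom{k}{\lfloor k/2\rfloor}\right\}.$$
   Context: For a simple graph $G$, the symmetric digraph $\overleftrightarrow{G}$ is obtained by replacing each edge $uv$ of $G$ by the pair of opposite arcs $\overrightarrow{uv}$ and $\overrightarrow{vu}$. An arc-colouring of $\overleftrightarrow{G}$ is proper of type I if any two consecutive arcs $\overrightarrow{uv},\overrightarrow{vw}$ (including the case $w=u$) receive distinct colours, i.e. there are no monochromatic 2-cycles and no monochromatic 2-paths. An arc-colouring is distinguishing if the only automorphism of $\overleftrightarrow{G}$ preserving the colour of every arc is the identity. $\chi'_{1,2}(\overleftrightarrow{G})$ is the least number of colours in a proper arc-colouring of type I of $\overleftrightarrow{G}$, and $\chi'_{D_{1,2}}(\overleftrightarrow{G})$ is the least number of colours in a distinguishing proper arc-colouring of type I. *)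

theory Defs
  imports Main
begin

text \<open>A simple graph is given by a vertex set V and a symmetric, irreflexive
adjacency relation E. The symmetric digraph has arc (u,v) iff E u v
(so every edge uv yields both arcs uv and vu).\<close>

definition arc_colouring_with :: "'a set \<Rightarrow> ('a \<Rightarrow> 'a \<Rightarrow> bool) \<Rightarrow> nat \<Rightarrow> ('a \<Rightarrow> 'a \<Rightarrow> nat) \<Rightarrow> bool" where
  "arc_colouring_with V E k c \<longleftrightarrow> (\<forall>u\<in>V. \<forall>v\<in>V. E u v \<longrightarrow> c u v < k)"

definition proper_typeI :: "'a set \<Rightarrow> ('a \<Rightarrow> 'a \<Rightarrow> bool) \<Rightarrow> ('a \<Rightarrow> 'a \<Rightarrow> 'c) \<Rightarrow> bool" where
  "proper_typeI V E c \<longleftrightarrow>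
     (\<forall>u\<in>V. \<forall>v\<in>V. \<forall>w\<in>V. E u v \<and> E v w \<longrightarrow> c u v \<noteq> c v w)"

definition digraph_aut :: "'a set \<Rightarrow> ('a \<Rightarrow> 'a \<Rightarrow> bool) \<Rightarrow> ('a \<Rightarrow> 'a) \<Rightarrow> bool" where
  "digraph_aut V E \<sigma> \<longleftrightarrow> bij_betw \<sigma> V V \<and> (\<forall>u\<in>V. \<forall>v\<in>V. E u v \<longleftrightarrow> E (\<sigma> u) (\<sigma> v))"

definition distinguishing :: "'a set \<Rightarrow> ('a \<Rightarrow> 'a \<Rightarrow> bool) \<Rightarrow> ('a \<Rightarrow> 'a \<Rightarrow> 'c) \<Rightarrow> bool" where
  "distinguishing V E c \<longleftrightarrow>
     (\<forall>\<sigma>. digraph_aut V E \<sigma> \<and> (\<forall>u\<in>V. \<forall>v\<in>V. E u v \<longrightarrow> c (\<sigma> u) (\<sigma> v) = c u v)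
          \<longrightarrow> (\<forall>v\<in>V. \<sigma> v = v))"

definition chi'_12 :: "'a set \<Rightarrow> ('a \<Rightarrow> 'a \<Rightarrow> bool) \<Rightarrow> nat" where
  "chi'_12 V E = (LEAST k. \<exists>c. arc_colouring_with V E k c \<and> proper_typeI V E c)"

definition chi'_D12 :: "'a set \<Rightarrow> ('a \<Rightarrow> 'a \<Rightarrow> bool) \<Rightarrow> nat" where
  "chi'_D12 V E = (LEAST k. \<exists>c. arc_colouring_with V E k c \<and> proper_typeI V E c
                                 \<and> distinguishing V E c)"

definition K_V :: "nat \<Rightarrow> nat set" where "K_V n = {0..<n}"
definition K_E :: "nat \<Rightarrow> nat \<Rightarrow> bool" where "K_E u v \<longleftrightarrow> u \<noteq> v"

end

theory Submission
  imports Defs Complex_Main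
begin

lemma LYM:
  "finite S \<Longrightarrow> F \<subseteq> Pow S \<Longrightarrow> (\<forall>A\<in>F. \<forall>B\<in>F. A \<subseteq> B \<longrightarrow> A = B)
   \<Longrightarrow> (\<Sum>A\<in>F. 1 / real (card S choose card A)) \<le> 1"
proof (induction "card S" arbitrary: S F)
  case 0
  then have "S = {}" by simp
  with 0 have "F \<subseteq> {{}}" by auto
  then have "F = {} \<or> F = {{}}" by blast
  then show ?case using \<open>S = {}\<close> by auto
next
  case (Suc m)
  have finF: "finite F" using finite_subset[OF Suc.prems(2)] Suc.prems(1) by simp
  show ?case
  proof (cases "{} \<in> F")
    case True
    then have "F = {{}}" using Suc.prems(3) by blast
    then show ?thesis by simp
  next
    case False
    define g where "g A = real (Suc m) / (real (card A) * real (Suc m choose card A))" for A :: "'a set"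
    have key: "(\<Sum>A\<in>{A\<in>F. x \<in> A}. g A) \<le> 1" if x: "x \<in> S" for x
    proof -
      let ?G = "(\<lambda>A. A - {x}) ` {A\<in>F. x \<in> A}"
      have cS: "card (S - {x}) = m" using Suc.hyps(2) x Suc.prems(1) by simp
      have inj: "inj_on (\<lambda>A. A - {x}) {A\<in>F. x \<in> A}"
      proof (rule inj_onI)
        fix A B assume "A \<in> {A\<in>F. x \<in> A}" "B \<in> {A\<in>F. x \<in> A}" "A - {x} = B - {x}"
        then show "A = B" by (metis insert_Diff mem_Collect_eq)
      qed
      have "?G \<subseteq> Pow (S - {x})" using Suc.prems(2) by auto
      moreover have "\<forall>A\<in>?G. \<forall>B\<in>?G. A \<subseteq> B \<longrightarrow> A = B"
      proof (intro ballI impI)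
        fix A B assume "A \<in> ?G" "B \<in> ?G" "A \<subseteq> B"
        then obtain A' B' where "A' \<in> F" "x \<in> A'" "A = A' - {x}" "B' \<in> F" "x \<in> B'" "B = B' - {x}" by auto
        then have "A' \<subseteq> B'" using \<open>A \<subseteq> B\<close> by blast
        then show "A = B" using Suc.prems(3) \<open>A' \<in> F\<close> \<open>B' \<in> F\<close> \<open>A = A' - {x}\<close> \<open>B = B' - {x}\<close> by blast
      qed
      ultimately have "(\<Sum>B\<in>?G. 1 / real (card (S - {x}) choose card B)) \<le> 1"
        using Suc.hyps(1)[of "S - {x}" ?G] cS Suc.prems(1) by simp
      also have "(\<Sum>B\<in>?G. 1 / real (card (S - {x}) choose card B))
          = (\<Sum>A\<in>{A\<in>F. x \<in> A}. 1 / real (m choose card (A - {x})))"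
        unfolding cS using sum.reindex[OF inj, of "\<lambda>B. 1 / real (m choose card B)"] by (simp only: comp_def)
      also have "\<dots> = (\<Sum>A\<in>{A\<in>F. x \<in> A}. g A)"
      proof (rule sum.cong)
        fix A assume A: "A \<in> {A\<in>F. x \<in> A}"
        have finA: "finite A" using A Suc.prems(2) finite_subset[OF _ Suc.prems(1)] by auto
        have "card A \<noteq> 0" using A finA by auto
        then obtain a where a: "card A = Suc a" by (cases "card A") auto
        have cA: "card (A - {x}) = a" using a A finA by simp
        have e: "real (Suc m) * real (m choose a) = real (Suc m choose Suc a) * real (Suc a)"
          using arg_cong[OF Suc_times_binomial_eq[of m a], of real] by (simp only: of_nat_mult)
        have "A \<subseteq> S" using A Suc.prems(2) by auto
        then have "card A \<le> Suc m" using Suc.hyps(2) card_mono[OF Suc.prems(1)] by simp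
        then have pos: "real (m choose a) > 0" using a by simp
        show "1 / real (m choose card (A - {x})) = g A"
        proof -
          have pos2: "real (Suc m choose Suc a) > 0" using e pos
            by (metis of_nat_0_less_iff mult_pos_pos zero_less_Suc zero_less_mult_pos2)
          show ?thesis unfolding g_def cA a using e pos pos2
            by (simp add: field_simps del: of_nat_Suc binomial_Suc_Suc)
        qed
      qed simp
      finally show ?thesis .
    qed
    have "(\<Sum>x\<in>S. \<Sum>A\<in>{A\<in>F. x \<in> A}. g A) \<le> (\<Sum>x\<in>S. 1)"
      by (rule sum_mono) (use key in auto)
    also have "\<dots> = real (Suc m)" using Suc.hyps(2) by simp
    also have "(\<Sum>x\<in>S. \<Sum>A\<in>{A\<in>F. x \<in> A}. g A) = (\<Sum>A\<in>F. \<Sum>x\<in>{x\<in>S. x \<in> A}. g A)"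
      by (rule sum.swap_restrict[OF Suc.prems(1) finF])
    also have "\<dots> = (\<Sum>A\<in>F. real (Suc m) * (1 / real (card S choose card A)))"
    proof (rule sum.cong)
      fix A assume A: "A \<in> F"
      then have "A \<subseteq> S" using Suc.prems(2) by auto
      then have e: "{x\<in>S. x \<in> A} = A" by auto
      have finA: "finite A" using \<open>A \<subseteq> S\<close> Suc.prems(1) finite_subset by blast
      have "card A \<noteq> 0" using False A finA by auto
      then show "(\<Sum>x\<in>{x\<in>S. x \<in> A}. g A) = real (Suc m) * (1 / real (card S choose card A))"
        unfolding e g_def using Suc.hyps(2) \<open>card A \<noteq> 0\<close> by simp
    qed simp
    also have "\<dots> = real (Suc m) * (\<Sum>A\<in>F. 1 / real (card S choose card A))"
      by (simp add: sum_distrib_left)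
    finally show ?thesis by (simp del: of_nat_Suc)
  qed
qed


lemma sperner:
  assumes "finite S" "F \<subseteq> Pow S" "\<forall>A\<in>F. \<forall>B\<in>F. A \<subseteq> B \<longrightarrow> A = B"
  shows "card F \<le> card S choose (card S div 2)"
proof -
  let ?N = "card S choose (card S div 2)"
  have finF: "finite F" using finite_subset[OF assms(2)] assms(1) by simp
  have Npos: "real ?N > 0" by simp
  have "(\<Sum>A\<in>F. 1 / real ?N) \<le> (\<Sum>A\<in>F. 1 / real (card S choose card A))"
  proof (rule sum_mono)
    fix A assume A: "A \<in> F"
    then have "card A \<le> card S" using assms(1,2) card_mono by blast
    then have "real (card S choose card A) > 0" by simp
    moreover have "real (card S choose card A) \<le> real ?N" using binomial_maximum by simp
    ultimately show "1 / real ?N \<le> 1 / real (card S choose card A)"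
      by (simp add: frac_le)
  qed
  also have "\<dots> \<le> 1" by (rule LYM[OF assms])
  finally have "real (card F) / real ?N \<le> 1" by simp
  then have "real (card F) \<le> real ?N" using Npos by (simp add: divide_le_eq)
  then show ?thesis by simp
qed

lemma proper_dist:
  fixes c :: "nat \<Rightarrow> nat \<Rightarrow> 'c"
  assumes "proper_typeI (K_V n) K_E c"
  shows "distinguishing (K_V n) K_E c"
  unfolding distinguishing_def
proof (intro allI impI ballI)
  fix \<sigma> v
  assume h: "digraph_aut (K_V n) K_E \<sigma> \<and> (\<forall>u\<in>K_V n. \<forall>v\<in>K_V n. K_E u v \<longrightarrow> c (\<sigma> u) (\<sigma> v) = c u v)"
    and v: "v \<in> K_V n"
  show "\<sigma> v = v"
  proof (rule ccontr)
    assume ne: "\<sigma> v \<noteq> v"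
    have bij: "bij_betw \<sigma> (K_V n) (K_V n)" using h unfolding digraph_aut_def by simp
    then have sv: "\<sigma> v \<in> K_V n" using v bij_betwE by blast
    from bij v obtain x where x: "x \<in> K_V n" "\<sigma> x = v" by (metis bij_betw_imp_surj_on imageE)
    have xv: "x \<noteq> v" using x ne by auto
    have "c (\<sigma> v) (\<sigma> x) = c v x" using h[THEN conjunct2, rule_format, OF v x(1)] xv unfolding K_E_def by simp
    then have "c (\<sigma> v) v = c v x" using x by simp
    moreover have "c (\<sigma> v) v \<noteq> c v x"
      using assms[unfolded proper_typeI_def, rule_format, OF sv v x(1)] xv ne unfolding K_E_def by simp
    ultimately show False by simp
  qed
qed

lemma lower:
  assumes "arc_colouring_with (K_V n) K_E k c" "proper_typeI (K_V n) K_E c"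
  shows "n \<le> k choose (k div 2)"
proof -
  define Out where "Out v = {c v x | x. x \<in> K_V n \<and> x \<noteq> v}" for v
  have sub: "Out v \<subseteq> {0..<k}" if "v \<in> K_V n" for v
    using assms(1) that unfolding Out_def arc_colouring_with_def K_E_def by auto
  have key: "\<not> Out u \<subseteq> Out v" if "u \<in> K_V n" "v \<in> K_V n" "u \<noteq> v" for u v
  proof
    assume "Out u \<subseteq> Out v"
    moreover have "c u v \<in> Out u" using that unfolding Out_def by auto
    ultimately have "c u v \<in> Out v" by blast
    then obtain x where x: "x \<in> K_V n" "x \<noteq> v" "c u v = c v x" unfolding Out_def by auto
    then show False using assms(2)[unfolded proper_typeI_def, rule_format, OF that(1,2) x(1)] that(3)
      unfolding K_E_def by simp
  qed
  have inj: "inj_on Out (K_V n)"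
    by (rule inj_onI) (use key in blast)
  have "card (Out ` K_V n) \<le> card {0..<k} choose (card {0..<k} div 2)"
  proof (rule sperner)
    show "Out ` K_V n \<subseteq> Pow {0..<k}" using sub by auto
    show "\<forall>A\<in>Out ` K_V n. \<forall>B\<in>Out ` K_V n. A \<subseteq> B \<longrightarrow> A = B" using key by blast
  qed simp
  then show ?thesis using card_image[OF inj] unfolding K_V_def by simp
qed

lemma upper:
  assumes "n \<le> k choose (k div 2)"
  shows "\<exists>c. arc_colouring_with (K_V n) K_E k c \<and> proper_typeI (K_V n) K_E c"
proof -
  let ?T = "{A. A \<subseteq> {0..<k} \<and> card A = k div 2}"
  have cT: "card ?T = k choose (k div 2)" using n_subsets[of "{0..<k::nat}" "k div 2"] by simp
  have "finite ?T" by simp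
  then obtain f where f: "f ` K_V n \<subseteq> ?T" "inj_on f (K_V n)"
    using card_le_inj[of "K_V n" ?T] assms cT unfolding K_V_def by auto
  define c where "c u v = (SOME x. x \<in> f u - f v)" for u v
  have cin: "c u v \<in> f u - f v" if "u \<in> K_V n" "v \<in> K_V n" "u \<noteq> v" for u v
  proof -
    have fu: "f u \<subseteq> {0..<k}" "card (f u) = k div 2" using f(1) that by auto
    have fv: "f v \<subseteq> {0..<k}" "card (f v) = k div 2" using f(1) that by auto
    have "f u \<noteq> f v" using f(2) that inj_on_def by metis
    have "f u - f v \<noteq> {}"
    proof
      assume "f u - f v = {}"
      then have "f u \<subseteq> f v" by blast
      then have "f u = f v" using card_subset_eq[of "f v" "f u"] fu fv finite_subset[OF fv(1)] by auto
      then show False using \<open>f u \<noteq> f v\<close> by simp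
    qed
    then have "\<exists>x. x \<in> f u - f v" by blast
    then show ?thesis unfolding c_def by (rule someI_ex)
  qed
  have "arc_colouring_with (K_V n) K_E k c"
    unfolding arc_colouring_with_def K_E_def
  proof (intro ballI impI)
    fix u v assume "u \<in> K_V n" "v \<in> K_V n" "u \<noteq> v"
    then have "c u v \<in> f u" using cin by blast
    moreover have "f u \<subseteq> {0..<k}" using f(1) \<open>u \<in> K_V n\<close> by auto
    ultimately show "c u v < k" by auto
  qed
  moreover have "proper_typeI (K_V n) K_E c"
    unfolding proper_typeI_def K_E_def
  proof (intro ballI impI)
    fix u v w assume "u \<in> K_V n" "v \<in> K_V n" "w \<in> K_V n" "u \<noteq> v \<and> v \<noteq> w"
    then have "c u v \<notin> f v" "c v w \<in> f v" using cin by blast+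
    then show "c u v \<noteq> c v w" by auto
  qed
  ultimately show ?thesis by blast
qed

theorem proposition2p1:
  fixes n :: nat
  assumes "n \<ge> 1"
  shows "(\<forall>c :: nat \<Rightarrow> nat \<Rightarrow> 'c. proper_typeI (K_V n) K_E c \<longrightarrow> distinguishing (K_V n) K_E c)
         \<and> chi'_D12 (K_V n) K_E = chi'_12 (K_V n) K_E
         \<and> chi'_12 (K_V n) K_E = (LEAST k. n \<le> k choose (k div 2))"
proof (intro conjI)
  show "\<forall>c :: nat \<Rightarrow> nat \<Rightarrow> 'c. proper_typeI (K_V n) K_E c \<longrightarrow> distinguishing (K_V n) K_E c"
    using proper_dist by blast
  have "\<And>k. (\<exists>c. arc_colouring_with (K_V n) K_E k c \<and> proper_typeI (K_V n) K_E c
                                 \<and> distinguishing (K_V n) K_E c)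
        = (\<exists>c. arc_colouring_with (K_V n) K_E k c \<and> proper_typeI (K_V n) K_E c)"
    using proper_dist by blast
  then show "chi'_D12 (K_V n) K_E = chi'_12 (K_V n) K_E"
    unfolding chi'_D12_def chi'_12_def by simp
  have "\<And>k. (\<exists>c. arc_colouring_with (K_V n) K_E k c \<and> proper_typeI (K_V n) K_E c)
        = (n \<le> k choose (k div 2))"
    using lower upper by blast
  then show "chi'_12 (K_V n) K_E = (LEAST k. n \<le> k choose (k div 2))"
    unfolding chi'_12_def by simp
qed

end
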